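(* Let $L$ be a loss function satisfying axioms (A1)–(A7) listed in the context. Then there is a real constant $K$ such that for every finite variable set $V$, every state $\mathbf x\in\{0,1\}^V$ and every $\mathbf p\in[0,1]^V$, $$L(\mathbf x,\mathbf p)=-K\Big(\sum_{i:\,\mathbf x\models X_i}\log\mathbf p_i+\sum_{i:\,\mathbf x\models\neg X_i}\log(1-\mathbf p_i)\Big).$$
   Context: For a finite set $V$ of Boolean variables, a sentence over $V$ is a propositional formula built from variables in $V$; $\mathit{true}$ is the constant true sentence. A state $\mathbf x\in\{0,1\}^V$ is identified both with the sentence conjoining the literals it makes true and with a vector in $[0,1]^V$. A loss function $L$ assigns to every $\mathbf p\in[0,1]^V$ and every sentence $\alpha$ with variables in $V$ a value $L(\alpha,\mathbf p)\in\mathbb R\cup\{+\infty\}$; $-\log 0=+\infty$. $\alpha\models\beta$ means every state satisfying $\alpha$ satisfies $\beta$. For disjoint $X,Y$, $[\mathbf p\,\mathbf q]$ is the concatenation of $\mathbf p\in[0,1]^X$, $\mathbf q\in[0,1]^Y$. (A1) Truth: $L(\mathit{true},\mathbf p)=0$ for all $\mathbf p$. (A2) Additive independence: for $\alpha$ over $X$, $\beta$ over $Y$, $X\cap Y=\emptyset$: $L(\alpha\wedge\beta,[\mathbf p\,\mathbf q])=L(\alpha,\mathbf p)+L(\beta,\mathbf q)$. (A3) Monotonicity: $\alpha\models\beta$ implies $L(\alpha,\mathbf p)\ge L(\beta,\mathbf p)$. (A4) Identity: $L(\mathbf x,\mathbf x)=0$ for every state $\mathbf x$. (A5) Label-literal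 correspondence: for each variable $X$ there are real constants $K_X,K'_X$ with $L(X,p)=-K_X\log p$ and $L(\neg X,p)=-K'_X\log(1-p)$ for all $p\in[0,1]$ (vectors over $\{X\}$). (A6) Value symmetry: $L(\alpha,\mathbf p)=L(\bar\alpha,\mathbf 1-\mathbf p)$, where $\bar\alpha$ replaces each variable by its negation. (A7) Variable symmetry: for a permutation $\pi$ of the variable set of $\mathbf p$, $L(\alpha,\mathbf p)=L(\pi(\alpha),\pi(\mathbf p))$. *)

theory Defs
  imports "HOL-Analysis.Analysis" "HOL-Library.Extended_Real" "HOL-Library.FuncSet"
begin

datatype 'v form = TT | Var 'v | Neg "'v form" | Conj "'v form" "'v form" | Disj "'v form" "'v form"

abbreviation vars :: "'v form \<Rightarrow> 'v set" where "vars \<equiv> set_form"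

fun eval :: "('v \<Rightarrow> bool) \<Rightarrow> 'v form \<Rightarrow> bool" where
  "eval s TT = True"
| "eval s (Var v) = s v"
| "eval s (Neg a) = (\<not> eval s a)"
| "eval s (Conj a b) = (eval s a \<and> eval s b)"
| "eval s (Disj a b) = (eval s a \<or> eval s b)"

definition entails :: "'v form \<Rightarrow> 'v form \<Rightarrow> bool" where
  "entails a b \<longleftrightarrow> (\<forall>s. eval s a \<longrightarrow> eval s b)"

fun dual :: "'v form \<Rightarrow> 'v form" where
  "dual TT = TT"
| "dual (Var v) = Neg (Var v)"
| "dual (Neg a) = Neg (dual a)"
| "dual (Conj a b) = Conj (dual a) (dual b)"
| "dual (Disj a b) = Disj (dual a) (dual b)"

definition vecs :: "'v set \<Rightarrow> ('v \<Rightarrow> real) set" where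
  "vecs V = V \<rightarrow>\<^sub>E {0..1}"

definition states :: "'v set \<Rightarrow> ('v \<Rightarrow> real) set" where
  "states V = V \<rightarrow>\<^sub>E {0,1}"

fun conj_list :: "'v form list \<Rightarrow> 'v form" where
  "conj_list [] = TT"
| "conj_list [a] = a"
| "conj_list (a # as) = Conj a (conj_list as)"

definition lit :: "('v \<Rightarrow> real) \<Rightarrow> 'v \<Rightarrow> 'v form" where
  "lit x v = (if x v = 1 then Var v else Neg (Var v))"

text \<open>The sentence conjoining the literals made true by state x over V
  (in some fixed enumeration order of V; by monotonicity the order is irrelevant).\<close>
definition state_form :: "'v set \<Rightarrow> ('v \<Rightarrow> real) \<Rightarrow> 'v form" where
  "state_form V x = conj_list (map (lit x) (SOME xs. distinct xs \<and> set xs = V))"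

definition nlog :: "real \<Rightarrow> ereal" where
  "nlog p = (if p = 0 then \<infinity> else ereal (- ln p))"

text \<open>A loss function: L V p a for finite V, p in [0,1]^V, a with variables in V;
  values in R \<union> {+\<infinity>}.\<close>
type_synonym 'v loss = "'v set \<Rightarrow> ('v \<Rightarrow> real) \<Rightarrow> 'v form \<Rightarrow> ereal"

definition loss_range :: "'v loss \<Rightarrow> bool" where
  "loss_range L \<longleftrightarrow> (\<forall>V p a. finite V \<longrightarrow> p \<in> vecs V \<longrightarrow> vars a \<subseteq> V \<longrightarrow> L V p a \<noteq> -\<infinity>)"

definition A1 :: "'v loss \<Rightarrow> bool" where
  "A1 L \<longleftrightarrow> (\<forall>V p. finite V \<longrightarrow> p \<in> vecs V \<longrightarrow> L V p TT = 0)"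

definition A2 :: "'v loss \<Rightarrow> bool" where
  "A2 L \<longleftrightarrow> (\<forall>X Y a b p q. finite X \<longrightarrow> finite Y \<longrightarrow> X \<inter> Y = {} \<longrightarrow>
      vars a \<subseteq> X \<longrightarrow> vars b \<subseteq> Y \<longrightarrow> p \<in> vecs X \<longrightarrow> q \<in> vecs Y \<longrightarrow>
      L (X \<union> Y) (\<lambda>v. if v \<in> X then p v else q v) (Conj a b) = L X p a + L Y q b)"

definition A3 :: "'v loss \<Rightarrow> bool" where
  "A3 L \<longleftrightarrow> (\<forall>V p a b. finite V \<longrightarrow> p \<in> vecs V \<longrightarrow> vars a \<subseteq> V \<longrightarrow> vars b \<subseteq> V \<longrightarrow>
      entails a b \<longrightarrow> L V p a \<ge> L V p b)"

definition A4 :: "'v loss \<Rightarrow> bool" where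
  "A4 L \<longleftrightarrow> (\<forall>V x. finite V \<longrightarrow> x \<in> states V \<longrightarrow> L V x (state_form V x) = 0)"

definition A5 :: "'v loss \<Rightarrow> bool" where
  "A5 L \<longleftrightarrow> (\<forall>X. \<exists>K K' :: real. \<forall>p \<in> {0..1}.
      L {X} (\<lambda>v\<in>{X}. p) (Var X) = ereal K * nlog p \<and>
      L {X} (\<lambda>v\<in>{X}. p) (Neg (Var X)) = ereal K' * nlog (1 - p))"

definition A6 :: "'v loss \<Rightarrow> bool" where
  "A6 L \<longleftrightarrow> (\<forall>V p a. finite V \<longrightarrow> p \<in> vecs V \<longrightarrow> vars a \<subseteq> V \<longrightarrow>
      L V p a = L V (\<lambda>v\<in>V. 1 - p v) (dual a))"

text \<open>pi(p) puts p_i at coordinate pi(i); pi(a) renames variables.\<close>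
definition A7 :: "'v loss \<Rightarrow> bool" where
  "A7 L \<longleftrightarrow> (\<forall>V p a \<pi>. finite V \<longrightarrow> p \<in> vecs V \<longrightarrow> vars a \<subseteq> V \<longrightarrow> bij_betw \<pi> V V \<longrightarrow>
      L V p a = L V (\<lambda>v\<in>V. p (inv_into V \<pi> v)) (map_form \<pi> a))"

end

theory Submission
  imports Defs
begin

lemma nlog_nonneg: "p \<in> {0..1} \<Longrightarrow> 0 \<le> nlog p"
  by (auto simp: nlog_def)

lemma nlog_half: "nlog (1/2) = ereal (ln 2)"
  by (simp add: nlog_def ln_div)

lemma nlog_one: "nlog 1 = 0"
  by (simp add: nlog_def zero_ereal_def)

lemma vars_conj_list: "vars (conj_list (map (lit x) xs)) \<subseteq> set xs"
  by (induction xs rule: induct_list012) (auto simp: lit_def)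

lemma vecs_restrict: "p \<in> vecs V \<Longrightarrow> W \<subseteq> V \<Longrightarrow> restrict p W \<in> vecs W"
  by (auto simp: vecs_def PiE_def Pi_def)

lemma A2D: "A2 L \<Longrightarrow> finite X \<Longrightarrow> finite Y \<Longrightarrow> X \<inter> Y = {} \<Longrightarrow>
      vars a \<subseteq> X \<Longrightarrow> vars b \<subseteq> Y \<Longrightarrow> p \<in> vecs X \<Longrightarrow> q \<in> vecs Y \<Longrightarrow>
      L (X \<union> Y) (\<lambda>v. if v \<in> X then p v else q v) (Conj a b) = L X p a + L Y q b"
  unfolding A2_def by blast

lemma A6D: "A6 L \<Longrightarrow> finite V \<Longrightarrow> p \<in> vecs V \<Longrightarrow> vars a \<subseteq> V \<Longrightarrow>
      L V p a = L V (\<lambda>v\<in>V. 1 - p v) (dual a)"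
  unfolding A6_def by blast

lemma A7D: "A7 L \<Longrightarrow> finite V \<Longrightarrow> p \<in> vecs V \<Longrightarrow> vars a \<subseteq> V \<Longrightarrow> bij_betw \<pi> V V \<Longrightarrow>
      L V p a = L V (\<lambda>v\<in>V. p (inv_into V \<pi> v)) (map_form \<pi> a)"
  unfolding A7_def by blast

theorem lemma1:
  fixes L :: "'v loss"
  assumes "loss_range L" "A1 L" "A2 L" "A3 L" "A4 L" "A5 L" "A6 L" "A7 L"
  shows "\<exists>K::real. \<forall>V x p. finite V \<longrightarrow> x \<in> states V \<longrightarrow> p \<in> vecs V \<longrightarrow>
     L V p (state_form V x) =
       ereal K * ((\<Sum>i\<in>{i\<in>V. x i = 1}. nlog (p i)) + (\<Sum>i\<in>{i\<in>V. x i = 0}. nlog (1 - p i)))"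
proof -
  from assms(6) obtain Kf Kf' where KF: "\<And>X p. p \<in> {0..1} \<Longrightarrow>
      L {X} (\<lambda>v\<in>{X}. p) (Var X) = ereal (Kf X) * nlog p \<and>
      L {X} (\<lambda>v\<in>{X}. p) (Neg (Var X)) = ereal (Kf' X) * nlog (1 - p)"
    unfolding A5_def by metis
  have KK': "Kf' X = Kf X" for X
  proof -
    have v: "(\<lambda>v\<in>{X}. 1/2::real) \<in> vecs {X}" by (simp add: vecs_def)
    have r: "(\<lambda>v\<in>{X}. 1 - (\<lambda>v\<in>{X}. 1/2::real) v) = (\<lambda>v\<in>{X}. 1/2)"
      by (rule restrict_ext) simp
    have "L {X} (\<lambda>v\<in>{X}. 1/2) (Var X) = L {X} (\<lambda>v\<in>{X}. 1/2) (Neg (Var X))"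
    proof -
      have "L {X} (\<lambda>v\<in>{X}. 1/2) (Var X) = L {X} (\<lambda>v\<in>{X}. 1 - (\<lambda>v\<in>{X}. 1/2::real) v) (dual (Var X))"
        using A6D[OF assms(7) _ v, of "Var X"] by simp
      then show ?thesis by (simp only: r dual.simps)
    qed
    then have "ereal (Kf X) * nlog (1/2) = ereal (Kf' X) * nlog (1 - 1/2)"
      using KF[of "1/2" X] by simp
    then show ?thesis by (simp add: nlog_half)
  qed
  have pair: "L {X,Y} (\<lambda>v\<in>{X,Y}. if v = X then a else b) (Conj (Var X) (Var Y))
     = ereal (Kf X) * nlog a + ereal (Kf Y) * nlog b"
    if "X \<noteq> Y" "a \<in> {0..1}" "b \<in> {0..1}" for X Y a b
  proof -
    have "L ({X} \<union> {Y}) (\<lambda>v. if v \<in> {X} then (\<lambda>v\<in>{X}. a) v else (\<lambda>v\<in>{Y}. b) v) (Conj (Var X) (Var Y))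
       = L {X} (\<lambda>v\<in>{X}. a) (Var X) + L {Y} (\<lambda>v\<in>{Y}. b) (Var Y)"
      using that by (intro A2D[OF assms(3)]) (auto simp: vecs_def split: if_splits)
    moreover have "(\<lambda>v. if v \<in> {X} then (\<lambda>v\<in>{X}. a) v else (\<lambda>v\<in>{Y}. b) v) = (\<lambda>v\<in>{X,Y}. if v = X then a else b)"
      by (rule ext) auto
    moreover have "{X} \<union> {Y} = {X,Y}" by blast
    ultimately have "L {X,Y} (\<lambda>v\<in>{X,Y}. if v = X then a else b) (Conj (Var X) (Var Y))
       = L {X} (\<lambda>v\<in>{X}. a) (Var X) + L {Y} (\<lambda>v\<in>{Y}. b) (Var Y)" by (simp only:)
    then show ?thesis using KF that by simp
  qed
  have KXY: "Kf X = Kf Y" if "X \<noteq> Y" for X Y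
  proof -
    define \<pi> where "\<pi> = Transposition.transpose X Y"
    define P where "P = (\<lambda>v\<in>{X,Y}. if v = X then 1/2 else (1::real))"
    have bij: "bij_betw \<pi> {X,Y} {X,Y}" unfolding \<pi>_def
      by (rule bij_betw_subset[of _ UNIV]) (auto simp: bij_betw_def)
    have Pv: "P \<in> vecs {X,Y}" by (auto simp: P_def vecs_def)
    have h1: "L {X,Y} P (Conj (Var X) (Var Y)) =
       L {X,Y} (\<lambda>v\<in>{X,Y}. P (inv_into {X,Y} \<pi> v)) (map_form \<pi> (Conj (Var X) (Var Y)))"
      using bij Pv by (intro A7D[OF assms(8)]) auto
    have h2: "map_form \<pi> (Conj (Var X) (Var Y)) = Conj (Var Y) (Var X)"
      by (simp add: \<pi>_def)
    have h3: "(\<lambda>v\<in>{X,Y}. P (inv_into {X,Y} \<pi> v)) = (\<lambda>v\<in>{Y,X}. if v = Y then 1/2 else 1)"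
    proof (rule ext)
      fix v
      have inj: "inj_on \<pi> {X,Y}" using bij by (rule bij_betw_imp_inj_on)
      show "(\<lambda>v\<in>{X,Y}. P (inv_into {X,Y} \<pi> v)) v = (\<lambda>v\<in>{Y,X}. if v = Y then 1/2 else 1) v"
      proof (cases "v = X \<or> v = Y")
        case True
        then have "inv_into {X,Y} \<pi> v = \<pi> v"
          by (intro inv_into_f_eq[OF inj]) (auto simp: \<pi>_def)
        moreover have "\<pi> X = Y" "\<pi> Y = X" by (simp_all add: \<pi>_def)
        ultimately show ?thesis using True that unfolding P_def by (cases "v = X") simp_all
      qed auto
    qed
    have "ereal (Kf X) * nlog (1/2) + ereal (Kf Y) * nlog 1
        = ereal (Kf Y) * nlog (1/2) + ereal (Kf X) * nlog 1"
    proof -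
      have s: "{Y,X} = {X,Y}" by blast
      have e1: "L {X,Y} P (Conj (Var X) (Var Y)) = ereal (Kf X) * nlog (1/2) + ereal (Kf Y) * nlog 1"
        using pair[of X Y "1/2" 1] that by (simp add: P_def)
      have e2: "L {Y,X} (\<lambda>v\<in>{Y,X}. if v = Y then 1/2 else 1) (Conj (Var Y) (Var X)) = ereal (Kf Y) * nlog (1/2) + ereal (Kf X) * nlog 1"
        using pair[of Y X "1/2" 1] that by simp
      show ?thesis using h1 h2 h3 e1 e2 unfolding s by simp
    qed
    then show ?thesis by (simp add: nlog_half nlog_one)
  qed
  define K where "K = Kf undefined"
  have KX: "Kf X = K" for X unfolding K_def using KXY[of X undefined] by (cases "X = undefined") auto
  define g where "g p x i = (if x i = (1::real) then nlog (p i) else nlog (1 - p i))" for p x :: "'v \<Rightarrow> real" and i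
  have gnn: "0 \<le> g p x i" if "p i \<in> {0..1}" for p x i
    using that by (auto simp: g_def intro!: nlog_nonneg)
  have main: "\<forall>p. p \<in> vecs (set xs) \<longrightarrow>
      L (set xs) p (conj_list (map (lit x) xs)) = ereal K * (\<Sum>i\<in>set xs. g p x i)"
    if "distinct xs" for xs x
    using that
  proof (induction xs)
    case Nil
    then show ?case using assms(2) by (simp add: A1_def)
  next
    case (Cons v xs)
    show ?case
    proof (intro allI impI)
      fix p assume p: "p \<in> vecs (set (v # xs))"
      have pv: "p v \<in> {0..1}" using p by (auto simp: vecs_def)
      have single: "L {v} (restrict p {v}) (lit x v) = ereal K * g p x v"
      proof -
        have "restrict p {v} = (\<lambda>w\<in>{v}. p v)" by auto
        then show ?thesis using KF[OF pv, of v] KK' KX by (simp add: lit_def g_def)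
      qed
      show "L (set (v # xs)) p (conj_list (map (lit x) (v # xs))) = ereal K * (\<Sum>i\<in>set (v # xs). g p x i)"
      proof (cases "xs = []")
        case True
        have "p = restrict p {v}" using p True by (auto simp: vecs_def PiE_def extensional_def)
        then show ?thesis using single True by simp
      next
        case False
        then obtain w ws where xs: "xs = w # ws" by (cases xs) auto
        have cl: "conj_list (map (lit x) (v # xs)) = Conj (lit x v) (conj_list (map (lit x) xs))"
          by (simp add: xs)
        have dis: "{v} \<inter> set xs = {}" using Cons.prems by auto
        have "L ({v} \<union> set xs) (\<lambda>w. if w \<in> {v} then restrict p {v} w else restrict p (set xs) w)
            (Conj (lit x v) (conj_list (map (lit x) xs)))
          = L {v} (restrict p {v}) (lit x v) + L (set xs) (restrict p (set xs)) (conj_list (map (lit x) xs))"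
          apply (rule A2D[OF assms(3)])
                apply simp
               apply simp
              apply (rule dis)
             apply (simp add: lit_def)
            apply (rule vars_conj_list)
           apply (rule vecs_restrict[OF p])
           apply (auto)[1]
          apply (rule vecs_restrict[OF p])
          apply auto
          done
        moreover have "(\<lambda>w. if w \<in> {v} then restrict p {v} w else restrict p (set xs) w) = p"
          using p by (auto simp: vecs_def PiE_def extensional_def)
        moreover have "L (set xs) (restrict p (set xs)) (conj_list (map (lit x) xs))
            = ereal K * (\<Sum>i\<in>set xs. g p x i)"
        proof -
          have rv: "restrict p (set xs) \<in> vecs (set xs)" using vecs_restrict[OF p, of "set xs"] by auto
          have "L (set xs) (restrict p (set xs)) (conj_list (map (lit x) xs))
             = ereal K * (\<Sum>i\<in>set xs. g (restrict p (set xs)) x i)"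
            using Cons.IH Cons.prems rv by auto
          also have "(\<Sum>i\<in>set xs. g (restrict p (set xs)) x i) = (\<Sum>i\<in>set xs. g p x i)"
            by (rule sum.cong) (auto simp: g_def)
          finally show ?thesis .
        qed
        moreover have "(\<Sum>i\<in>set (v # xs). g p x i) = g p x v + (\<Sum>i\<in>set xs. g p x i)"
          using Cons.prems by simp
        moreover have "0 \<le> (\<Sum>i\<in>set xs. g p x i)"
          using p by (intro sum_nonneg gnn) (auto simp: vecs_def)
        moreover have "0 \<le> g p x v" using gnn pv by blast
        ultimately show ?thesis using single cl
          by (simp add: ereal_right_distrib)
      qed
    qed
  qed
  show ?thesis
  proof (intro exI allI impI)
    fix V :: "'v set" and x p :: "'v \<Rightarrow> real"
    assume V: "finite V" and x: "x \<in> states V" and p: "p \<in> vecs V"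
    define xs where "xs = (SOME xs. distinct xs \<and> set xs = V)"
    have xs: "distinct xs \<and> set xs = V"
      unfolding xs_def by (rule someI_ex) (use V finite_distinct_list in blast)
    have "L V p (state_form V x) = ereal K * (\<Sum>i\<in>V. g p x i)"
      using main[of xs x] xs p unfolding state_form_def xs_def[symmetric] by auto
    moreover have "(\<Sum>i\<in>V. g p x i) = (\<Sum>i\<in>{i\<in>V. x i = 1}. nlog (p i)) + (\<Sum>i\<in>{i\<in>V. x i = 0}. nlog (1 - p i))"
    proof -
      have U: "V = {i\<in>V. x i = 1} \<union> {i\<in>V. x i = 0}" using x by (auto simp: states_def)
      have "(\<Sum>i\<in>V. g p x i) = (\<Sum>i\<in>{i\<in>V. x i = 1}. g p x i) + (\<Sum>i\<in>{i\<in>V. x i = 0}. g p x i)"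
        by (subst U, rule sum.union_disjoint) (use V in auto)
      also have "\<dots> = (\<Sum>i\<in>{i\<in>V. x i = 1}. nlog (p i)) + (\<Sum>i\<in>{i\<in>V. x i = 0}. nlog (1 - p i))"
        by (intro arg_cong2[where f="(+)"] sum.cong) (auto simp: g_def)
      finally show ?thesis .
    qed
    ultimately show "L V p (state_form V x) = ereal K * ((\<Sum>i\<in>{i\<in>V. x i = 1}. nlog (p i)) + (\<Sum>i\<in>{i\<in>V. x i = 0}. nlog (1 - p i)))"
      by simp
  qed
qed

end
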